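(* There exists a compact, countably infinite topological space $(T,\tau)$ which is not the continuous image of Cantor's ternary set $C$; that is, there is no continuous surjection $f\colon C \to T$.
   Context: Cantor's ternary set is $C = \left\{ \sum_{n \in \mathbb{N}} \frac{\omega_n}{3^n} : \omega_n \in \{0,2\} \text{ for all } n \in \mathbb{N}\right\}$, equipped with the subspace topology induced by the Euclidean metric on $\mathbb{R}$. A subset $A$ of a topological space is called compact if every collection of open sets whose union contains $A$ has a finite subcollection whose union contains $A$; compactness does not presuppose the Hausdorff property. *)

theory Defs
  imports "HOL-Analysis.Analysis"
begin

text \<open>Cantor's ternary set: sums over n \<ge> 1 of omega_n / 3^n with omega_n in {0,2}.
  Here the index is shifted: omega is indexed from 0 and term k is omega k / 3^(k+1).\<close>
definition cantor_set :: "real set" where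
  "cantor_set = {x. \<exists>\<omega>::nat \<Rightarrow> real. (\<forall>n. \<omega> n \<in> {0, 2}) \<and> x = (\<Sum>n. \<omega> n / 3 ^ Suc n)}"

end

theory Submission
  imports Defs
begin

lemma cantor_compact: "compact cantor_set"
proof -
  define S :: "(nat \<Rightarrow> real) set" where "S = PiE UNIV (\<lambda>_. {0,2})"
  define g :: "(nat \<Rightarrow> real) \<Rightarrow> real" where "g = (\<lambda>\<omega>. \<Sum>n. \<omega> n / 3 ^ Suc n)"
  have "compactin (product_topology (\<lambda>_. euclidean) UNIV) S"
    unfolding S_def compactin_PiE by (auto intro: finite_imp_compact)
  hence cS: "compact S" by (simp add: euclidean_product_topology)
  have sM: "summable (\<lambda>n. 2 / 3 ^ Suc n :: real)"
  proof -
    have "summable (\<lambda>n. (2/3) * (1/3::real) ^ n)"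
      by (intro summable_mult summable_geometric) auto
    thus ?thesis by (simp add: power_divide field_simps)
  qed
  have ul: "uniform_limit S (\<lambda>n x. \<Sum>i<n. x i / 3 ^ Suc i) (\<lambda>x. suminf (\<lambda>i. x i / 3 ^ Suc i)) sequentially"
  proof (rule Weierstrass_m_test[OF _ sM])
    fix n x assume "x \<in> S"
    hence "x n \<in> {0,2}" unfolding S_def by auto
    thus "norm (x n / 3 ^ Suc n) \<le> 2 / 3 ^ Suc n" by auto
  qed
  have cg: "continuous_on S g"
    unfolding g_def
  proof (rule uniform_limit_theorem[OF _ ul])
    show "\<forall>\<^sub>F n in sequentially. continuous_on S (\<lambda>x. \<Sum>i<n. x i / 3 ^ Suc i)"
      by (intro always_eventually allI continuous_intros continuous_on_product_then_coordinatewise continuous_on_id) auto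
  qed simp
  have "cantor_set = g ` S"
    unfolding cantor_set_def g_def S_def
  proof (rule set_eqI, rule iffI)
    fix x assume "x \<in> {x. \<exists>\<omega>::nat \<Rightarrow> real. (\<forall>n. \<omega> n \<in> {0, 2}) \<and> x = (\<Sum>n. \<omega> n / 3 ^ Suc n)}"
    then obtain \<omega> :: "nat \<Rightarrow> real" where "\<forall>n. \<omega> n \<in> {0, 2}" "x = (\<Sum>n. \<omega> n / 3 ^ Suc n)" by blast
    thus "x \<in> (\<lambda>\<omega>. \<Sum>n. \<omega> n / 3 ^ Suc n) ` PiE UNIV (\<lambda>_. {0,2})"
      by (intro image_eqI[of _ _ \<omega>]) auto
  next
    fix x assume "x \<in> (\<lambda>\<omega>. \<Sum>n. \<omega> n / 3 ^ Suc n) ` PiE UNIV (\<lambda>_. {0::real,2})"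
    then obtain \<omega> where "\<omega> \<in> PiE UNIV (\<lambda>_. {0::real,2})" "x = (\<Sum>n. \<omega> n / 3 ^ Suc n)" by blast
    thus "x \<in> {x. \<exists>\<omega>::nat \<Rightarrow> real. (\<forall>n. \<omega> n \<in> {0, 2}) \<and> x = (\<Sum>n. \<omega> n / 3 ^ Suc n)}"
      by (auto simp: PiE_iff)
  qed
  thus ?thesis using compact_continuous_image[OF cg cS] by simp
qed

definition col :: "nat \<Rightarrow> nat" where "col p = fst (prod_decode (p - 2))"

definition Xop :: "nat set \<Rightarrow> bool" where
  "Xop U \<longleftrightarrow> (1 \<in> U \<longrightarrow> (\<exists>k. \<forall>p. 2 \<le> p \<and> k \<le> col p \<longrightarrow> p \<in> U)) \<and>
             (0 \<in> U \<longrightarrow> (\<forall>n. finite {p. 2 \<le> p \<and> col p = n \<and> p \<notin> U}))"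

lemma istop_Xop: "istopology Xop"
  unfolding istopology_def
proof (intro conjI allI impI ballI)
  fix S T assume S: "Xop S" and T: "Xop T"
  show "Xop (S \<inter> T)" unfolding Xop_def
  proof (intro conjI impI allI)
    assume "1 \<in> S \<inter> T"
    then obtain k1 k2 where "\<forall>p. 2 \<le> p \<and> k1 \<le> col p \<longrightarrow> p \<in> S" "\<forall>p. 2 \<le> p \<and> k2 \<le> col p \<longrightarrow> p \<in> T"
      using S T unfolding Xop_def by blast
    thus "\<exists>k. \<forall>p. 2 \<le> p \<and> k \<le> col p \<longrightarrow> p \<in> S \<inter> T"
      by (intro exI[of _ "max k1 k2"]) auto
  next
    fix n assume "0 \<in> S \<inter> T"
    hence "finite {p. 2 \<le> p \<and> col p = n \<and> p \<notin> S}" "finite {p. 2 \<le> p \<and> col p = n \<and> p \<notin> T}"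
      using S T unfolding Xop_def by auto
    hence "finite ({p. 2 \<le> p \<and> col p = n \<and> p \<notin> S} \<union> {p. 2 \<le> p \<and> col p = n \<and> p \<notin> T})" by simp
    thus "finite {p. 2 \<le> p \<and> col p = n \<and> p \<notin> S \<inter> T}"
      by (rule finite_subset[rotated]) auto
  qed
next
  fix K assume K: "\<forall>A\<in>K. Xop A"
  show "Xop (\<Union>K)" unfolding Xop_def
  proof (intro conjI impI allI)
    assume "1 \<in> \<Union>K"
    then obtain A where "A \<in> K" "1 \<in> A" by blast
    then obtain k where "\<forall>p. 2 \<le> p \<and> k \<le> col p \<longrightarrow> p \<in> A" using K unfolding Xop_def by blast
    thus "\<exists>k. \<forall>p. 2 \<le> p \<and> k \<le> col p \<longrightarrow> p \<in> \<Union>K" using \<open>A \<in> K\<close> by blast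
  next
    fix n assume "0 \<in> \<Union>K"
    then obtain A where "A \<in> K" "0 \<in> A" by blast
    hence "finite {p. 2 \<le> p \<and> col p = n \<and> p \<notin> A}" using K unfolding Xop_def by blast
    thus "finite {p. 2 \<le> p \<and> col p = n \<and> p \<notin> \<Union>K}"
      by (rule finite_subset[rotated]) (use \<open>A \<in> K\<close> in auto)
  qed
qed

definition XT :: "nat topology" where "XT = topology Xop"

lemma openin_XT: "openin XT U \<longleftrightarrow> Xop U"
  unfolding XT_def using istop_Xop by simp

lemma topspace_XT: "topspace XT = UNIV"
proof -
  have "Xop UNIV" unfolding Xop_def by auto
  thus ?thesis unfolding topspace_def openin_XT by auto
qed

lemma col_finite: "finite {p. 2 \<le> p \<and> col p < k \<and> p \<notin> U}" if "\<forall>n. finite {p. 2 \<le> p \<and> col p = n \<and> p \<notin> U}"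
proof -
  have "{p. 2 \<le> p \<and> col p < k \<and> p \<notin> U} = (\<Union>n<k. {p. 2 \<le> p \<and> col p = n \<and> p \<notin> U})" by auto
  thus ?thesis using that by simp
qed

lemma compact_XT: "compact_space XT"
  unfolding compact_space_alt topspace_XT
proof (intro allI impI)
  fix \<U> assume H: "(\<forall>U\<in>\<U>. openin XT U) \<and> UNIV \<subseteq> \<Union>\<U>"
  then obtain U0 U1 where U0: "U0 \<in> \<U>" "0 \<in> U0" and U1: "U1 \<in> \<U>" "1 \<in> U1" by blast
  have "Xop U0" "Xop U1" using H U0 U1 openin_XT by auto
  then obtain k where k: "\<forall>p. 2 \<le> p \<and> k \<le> col p \<longrightarrow> p \<in> U1"
    and fin: "\<forall>n. finite {p. 2 \<le> p \<and> col p = n \<and> p \<notin> U0}"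
    using U0 U1 unfolding Xop_def by blast
  define R where "R = {p. 2 \<le> p \<and> col p < k \<and> p \<notin> U0}"
  have fR: "finite R" unfolding R_def using col_finite[OF fin] .
  have "\<forall>r\<in>R. \<exists>V. V \<in> \<U> \<and> r \<in> V" using H by blast
  then obtain V where V: "\<And>r. r \<in> R \<Longrightarrow> V r \<in> \<U> \<and> r \<in> V r" by metis
  show "\<exists>\<F>. finite \<F> \<and> \<F> \<subseteq> \<U> \<and> UNIV \<subseteq> \<Union>\<F>"
  proof (intro exI[of _ "{U0, U1} \<union> V ` R"] conjI)
    show "finite ({U0, U1} \<union> V ` R)" using fR by simp
    show "{U0, U1} \<union> V ` R \<subseteq> \<U>" using U0 U1 V by auto
    show "UNIV \<subseteq> \<Union> ({U0, U1} \<union> V ` R)"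
    proof
      fix p :: nat
      show "p \<in> \<Union> ({U0, U1} \<union> V ` R)"
      proof (cases "p < 2")
        case True
        hence "p = 0 \<or> p = 1" by auto
        thus ?thesis using U0 U1 by auto
      next
        case False
        show ?thesis
        proof (cases "k \<le> col p")
          case True thus ?thesis using k False U1 by auto
        next
          case c: False
          show ?thesis
          proof (cases "p \<in> U0")
            case True thus ?thesis by auto
          next
            case False
            hence "p \<in> R" using c \<open>\<not> p < 2\<close> unfolding R_def by auto
            thus ?thesis using V by blast
          qed
        qed
      qed
    qed
  qed
qed


lemma open_single: "2 \<le> p \<Longrightarrow> openin XT {p}"
  unfolding openin_XT Xop_def by auto

lemma L1:
  assumes K: "compactin XT K" and "0 \<notin> K"
  shows "finite (K \<inter> {p. 2 \<le> p \<and> col p = n})"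
proof -
  define A where "A = {1} \<union> {p. 2 \<le> p \<and> col p \<noteq> n}"
  define Q where "Q = K \<inter> {p. 2 \<le> p \<and> col p = n}"
  have oA: "openin XT A" unfolding openin_XT Xop_def A_def
    by (auto intro!: exI[of _ "Suc n"])
  have cov: "K \<subseteq> \<Union>({A} \<union> (\<lambda>p. {p}) ` Q)"
  proof
    fix p assume "p \<in> K"
    hence "p \<noteq> 0" using assms(2) by metis
    thus "p \<in> \<Union>({A} \<union> (\<lambda>p. {p}) ` Q)"
      using \<open>p \<in> K\<close> unfolding A_def Q_def by (cases "p = 1") auto
  qed
  have "\<forall>U\<in>{A} \<union> (\<lambda>p. {p}) ` Q. openin XT U" using oA open_single unfolding Q_def by auto
  then obtain F where F: "finite F" "F \<subseteq> {A} \<union> (\<lambda>p. {p}) ` Q" "K \<subseteq> \<Union>F"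
    using K cov unfolding compactin_def by meson
  have "Q \<subseteq> \<Union>(F - {A})"
  proof
    fix q assume "q \<in> Q"
    then obtain B where "B \<in> F" "q \<in> B" using F(3) unfolding Q_def by blast
    moreover have "q \<notin> A" using \<open>q \<in> Q\<close> unfolding A_def Q_def by auto
    ultimately show "q \<in> \<Union>(F - {A})" by auto
  qed
  moreover have "finite (\<Union>(F - {A}))" using F(1,2) by auto
  ultimately show ?thesis unfolding Q_def by (rule finite_subset)
qed

lemma L2:
  assumes K: "compactin XT K" and "1 \<notin> K"
  shows "\<exists>k. \<forall>p\<in>K. 2 \<le> p \<longrightarrow> col p < k"
proof -
  define S where "S = col ` (K \<inter> {p. 2 \<le> p})"
  define sel where "sel c = (SOME p. p \<in> K \<and> 2 \<le> p \<and> col p = c)" for c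
  have sel: "sel c \<in> K \<and> 2 \<le> sel c \<and> col (sel c) = c" if "c \<in> S" for c
  proof -
    have "\<exists>p. p \<in> K \<and> 2 \<le> p \<and> col p = c" using that unfolding S_def by auto
    thus ?thesis unfolding sel_def by (rule someI_ex)
  qed
  define P where "P = sel ` S"
  define A where "A = - ({1} \<union> P)"
  have oA: "openin XT A" unfolding openin_XT Xop_def
  proof (intro conjI impI allI)
    fix n
    have "{p. 2 \<le> p \<and> col p = n \<and> p \<notin> A} \<subseteq> {sel n}"
      unfolding A_def P_def using sel by auto
    thus "finite {p. 2 \<le> p \<and> col p = n \<and> p \<notin> A}" by (rule finite_subset) simp
  qed (auto simp: A_def)
  have PK: "P \<subseteq> K" "\<forall>p\<in>P. 2 \<le> p" unfolding P_def using sel by auto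
  have cov: "K \<subseteq> \<Union>({A} \<union> (\<lambda>p. {p}) ` P)"
  proof
    fix p assume "p \<in> K"
    thus "p \<in> \<Union>({A} \<union> (\<lambda>p. {p}) ` P)"
      using assms(2) unfolding A_def by (cases "p \<in> P") auto
  qed
  have "\<forall>U\<in>{A} \<union> (\<lambda>p. {p}) ` P. openin XT U" using oA open_single PK by auto
  then obtain F where F: "finite F" "F \<subseteq> {A} \<union> (\<lambda>p. {p}) ` P" "K \<subseteq> \<Union>F"
    using K cov unfolding compactin_def by meson
  have "P \<subseteq> \<Union>(F - {A})"
  proof
    fix q assume "q \<in> P"
    then obtain B where "B \<in> F" "q \<in> B" using F(3) PK by blast
    moreover have "q \<notin> A" using \<open>q \<in> P\<close> unfolding A_def by auto
    ultimately show "q \<in> \<Union>(F - {A})" by auto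
  qed
  moreover have "finite (\<Union>(F - {A}))" using F(1,2) by auto
  ultimately have fP: "finite P" by (rule finite_subset)
  have "S \<subseteq> col ` P" unfolding P_def using sel by force
  hence fS: "finite S" using fP finite_subset by blast
  show ?thesis
  proof (intro exI[of _ "Suc (Max (insert 0 S))"] ballI impI)
    fix p assume "p \<in> K" "2 \<le> p"
    hence "col p \<in> S" unfolding S_def by auto
    hence "col p \<le> Max (insert 0 S)" using fS by simp
    thus "col p < Suc (Max (insert 0 S))" by simp
  qed
qed


lemma col_enc: "col (prod_encode (k, m) + 2) = k"
  unfolding col_def by simp

lemma no_surj:
  assumes cf: "continuous_map (top_of_set cantor_set) XT f" and sf: "f ` cantor_set = topspace XT"
  shows False
proof -
  let ?C = cantor_set
  have cC: "compact ?C" by (rule cantor_compact)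
  have cl0: "closedin XT {0}" unfolding closedin_def topspace_XT openin_XT Xop_def by auto
  have cl1: "closedin XT {1}" unfolding closedin_def topspace_XT openin_XT Xop_def by auto
  have "closedin (top_of_set ?C) {x \<in> topspace (top_of_set ?C). f x \<in> {0}}"
    by (rule closedin_continuous_map_preimage[OF cf cl0])
  hence ca: "closed {x \<in> ?C. f x = 0}"
    using closedin_closed_trans compact_imp_closed[OF cC] by auto
  have "closedin (top_of_set ?C) {x \<in> topspace (top_of_set ?C). f x \<in> {1}}"
    by (rule closedin_continuous_map_preimage[OF cf cl1])
  hence cb: "closed {x \<in> ?C. f x = 1}"
    using closedin_closed_trans compact_imp_closed[OF cC] by auto
  have "{x \<in> ?C. f x = 0} \<inter> {x \<in> ?C. f x = 1} = {}" by auto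
  then obtain Va Vb where V: "open Va" "open Vb" "{x \<in> ?C. f x = 0} \<subseteq> Va"
     "{x \<in> ?C. f x = 1} \<subseteq> Vb" "Va \<inter> Vb = {}"
    using separation_normal[OF ca cb] by metis
  have cpt: "compactin XT (f ` (?C - V))" if "open V" for V
  proof (rule image_compactin[OF _ cf])
    have "compact (?C \<inter> - V)" using cC that by (intro compact_Int_closed) auto
    hence "compact (?C - V)" by (simp add: Diff_eq)
    thus "compactin (top_of_set ?C) (?C - V)" by (simp add: compactin_subtopology)
  qed
  define Ka where "Ka = f ` (?C - Va)"
  define Kb where "Kb = f ` (?C - Vb)"
  have "0 \<notin> Ka" unfolding Ka_def using V(3) by auto
  have "1 \<notin> Kb" unfolding Kb_def using V(4) by auto
  obtain k where k: "\<forall>p\<in>Kb. 2 \<le> p \<longrightarrow> col p < k"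
    using L2[OF cpt[OF V(2)] \<open>1 \<notin> Kb\<close>[unfolded Kb_def]] unfolding Kb_def by blast
  have fin: "finite (Ka \<inter> {p. 2 \<le> p \<and> col p = k})"
    using L1[OF cpt[OF V(1)] \<open>0 \<notin> Ka\<close>[unfolded Ka_def]] unfolding Ka_def by blast
  define h where "h m = prod_encode (k, m) + 2" for m
  have ih: "inj h" unfolding h_def inj_def using inj_prod_encode
    by (metis add_right_cancel inj_onD UNIV_I Pair_inject)
  have "\<exists>m. h m \<notin> Ka"
  proof (rule ccontr)
    assume "\<not> ?thesis"
    hence "range h \<subseteq> Ka \<inter> {p. 2 \<le> p \<and> col p = k}" unfolding h_def using col_enc by auto
    hence "finite (range h)" using fin finite_subset by blast
    thus False using ih finite_imageD by (metis infinite_UNIV_nat)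
  qed
  then obtain m where m: "h m \<notin> Ka" by blast
  have "h m \<in> f ` ?C" using sf topspace_XT by auto
  then obtain c where c: "c \<in> ?C" "f c = h m" by auto
  have "c \<in> Va"
  proof (rule ccontr)
    assume "c \<notin> Va" hence "h m \<in> Ka" unfolding Ka_def using c by force
    thus False using m by simp
  qed
  moreover have "c \<in> Vb"
  proof (rule ccontr)
    assume "c \<notin> Vb" hence "h m \<in> Kb" unfolding Kb_def using c by force
    hence "col (h m) < k" using k unfolding h_def by auto
    thus False unfolding h_def using col_enc by simp
  qed
  ultimately show False using V(5) by auto
qed

theorem theorem1:
  shows "\<exists>X :: nat topology.
           compact_space X \<and> countable (topspace X) \<and> infinite (topspace X) \<and>
           \<not> (\<exists>f. continuous_map (top_of_set cantor_set) X f \<and> f ` cantor_set = topspace X)"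
  using compact_XT topspace_XT no_surj by (intro exI[of _ XT]) auto

end
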